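(* Let $Q$ be an inverse semigroup and let $b,c,u,v\in Q$ with $u\,\mathcal{R}\,v$. Then $bc^{-1}=u^{-1}v$ if and only if \[ub=vc,\qquad v\,\mathcal{R}\,vc,\qquad L_b\wedge L_c=L_{ub},\] where $\wedge$ is the meet in the semilattice $Q/\mathcal{L}$.
   Context: $a^{-1}$ denotes the unique inverse of $a$ in $Q$; $\mathcal{R},\mathcal{L}$ are Green's relations of $Q$ and $L_a$ the $\mathcal{L}$-class of $a$. The set $Q/\mathcal{L}$ is partially ordered by $L_a\leq L_b$ iff $Q^1a\subseteq Q^1b$; it is a meet semilattice, with $L_a\wedge L_b=L_c$ iff $c^{-1}c=a^{-1}ab^{-1}b$. *)

theory Defs
  imports Main
begin

definition is_inv :: "'a::semigroup_mult \<Rightarrow> 'a \<Rightarrow> bool" where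
  "is_inv a x \<longleftrightarrow> a * x * a = a \<and> x * a * x = x"

definition inverse_semigroup :: "'a::semigroup_mult itself \<Rightarrow> bool" where
  "inverse_semigroup _ \<longleftrightarrow> (\<forall>a::'a. \<exists>!x. is_inv a x)"

definition sinv :: "'a::semigroup_mult \<Rightarrow> 'a" where
  "sinv a = (THE x. is_inv a x)"

text \<open>Principal one-sided ideals Q^1 a and a Q^1.\<close>

definition lideal :: "'a::semigroup_mult \<Rightarrow> 'a set" where
  "lideal a = insert a (range (\<lambda>x. x * a))"

definition rideal :: "'a::semigroup_mult \<Rightarrow> 'a set" where
  "rideal a = insert a (range (\<lambda>x. a * x))"

definition greenL :: "'a::semigroup_mult \<Rightarrow> 'a \<Rightarrow> bool" where
  "greenL a b \<longleftrightarrow> lideal a = lideal b"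

definition greenR :: "'a::semigroup_mult \<Rightarrow> 'a \<Rightarrow> bool" where
  "greenR a b \<longleftrightarrow> rideal a = rideal b"

definition Lclass :: "'a::semigroup_mult \<Rightarrow> 'a set" where
  "Lclass a = {x. greenL x a}"

definition Lclass_le :: "'a::semigroup_mult set \<Rightarrow> 'a set \<Rightarrow> bool" where
  "Lclass_le X Y \<longleftrightarrow> (\<exists>a b. X = Lclass a \<and> Y = Lclass b \<and> lideal a \<subseteq> lideal b)"

definition Lmeet_is :: "'a::semigroup_mult set \<Rightarrow> 'a set \<Rightarrow> 'a set \<Rightarrow> bool" where
  "Lmeet_is X Y Z \<longleftrightarrow> Lclass_le Z X \<and> Lclass_le Z Y \<and>
     (\<forall>a. Lclass_le (Lclass a) X \<and> Lclass_le (Lclass a) Y \<longrightarrow> Lclass_le (Lclass a) Z)"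

end

theory Submission
  imports Defs
begin

context
  fixes dummy :: "'a::semigroup_mult itself"
  assumes IS: "inverse_semigroup TYPE('a)"
begin

lemma inv_ex: "is_inv (a::'a) (sinv a)"
proof -
  have "\<exists>!x. is_inv a x" using IS unfolding inverse_semigroup_def by blast
  thus ?thesis unfolding sinv_def by (rule theI')
qed

lemma inv_uniq: "is_inv (a::'a) x \<Longrightarrow> x = sinv a"
proof -
  assume h: "is_inv a x"
  have "\<exists>!x. is_inv a x" using IS unfolding inverse_semigroup_def by blast
  thus ?thesis using h inv_ex by blast
qed

lemma s1: "(a::'a) * (sinv a * a) = a" using inv_ex[of a] by (simp add: is_inv_def mult.assoc)
lemma s1': "(a::'a) * (sinv a * (a * x)) = a * x" by (metis s1 mult.assoc)
lemma s2: "sinv (a::'a) * (a * sinv a) = sinv a" using inv_ex[of a] by (simp add: is_inv_def mult.assoc)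

lemma s2': "sinv (a::'a) * (a * (sinv a * x)) = sinv a * x" by (metis s2 mult.assoc)
lemma ss: "sinv (sinv (a::'a)) = a"
  using inv_uniq[of "sinv a" a] inv_ex[of a] by (simp add: is_inv_def)

lemma idem_s: "(e::'a) * e = e \<Longrightarrow> sinv e = e"
  using inv_uniq[of e e] by (simp add: is_inv_def)

lemma comm: assumes e: "(e::'a) * e = e" and f: "f * f = f" shows "e * f = f * e"
proof -
  define x where "x = sinv (e*f)"
  have i: "is_inv (e*f) x" unfolding x_def by (rule inv_ex)
  have "is_inv (e*f) (f*x*e)" using i e f unfolding is_inv_def
    by (metis mult.assoc)
  hence "f*x*e = sinv (e*f)" by (rule inv_uniq)
  hence xe: "x = f*x*e" unfolding x_def by simp
  have "x * x = x"
  proof -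
    have "x*x = f*(x*(e*f)*x)*e" by (metis xe mult.assoc)
    also have "\<dots> = x" using i xe unfolding is_inv_def by simp
    finally show ?thesis .
  qed
  hence "sinv x = x" by (rule idem_s)
  hence ef: "e*f*(e*f) = e*f" using ss \<open>x*x = x\<close> unfolding x_def by metis
  define y where "y = sinv (f*e)"
  have i2: "is_inv (f*e) y" unfolding y_def by (rule inv_ex)
  have "is_inv (f*e) (e*y*f)" using i2 e f unfolding is_inv_def
    by (metis mult.assoc)
  hence "e*y*f = sinv (f*e)" by (rule inv_uniq)
  hence ye: "y = e*y*f" unfolding y_def by simp
  have "y * y = y"
  proof -
    have "y*y = e*(y*(f*e)*y)*f" by (metis ye mult.assoc)
    also have "\<dots> = y" using i2 ye unfolding is_inv_def by simp
    finally show ?thesis .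
  qed
  hence "sinv y = y" by (rule idem_s)
  hence fe: "f*e*(f*e) = f*e" using ss \<open>y*y = y\<close> unfolding y_def by metis
  have "is_inv (e*f) (f*e)" unfolding is_inv_def
    using ef fe e f by (metis mult.assoc)
  hence "f*e = sinv (e*f)" by (rule inv_uniq)
  also have "\<dots> = e*f" using ef by (rule idem_s)
  finally show ?thesis by simp
qed

lemma idR: "(a::'a) * sinv a * (a * sinv a) = a * sinv a"
  by (metis s1 mult.assoc)
lemma idL: "sinv (a::'a) * a * (sinv a * a) = sinv a * a"
  by (metis s2 mult.assoc)

lemma s_mult: "sinv ((a::'a) * b) = sinv b * sinv a"
proof -
  have c: "b * sinv b * (sinv a * a) = sinv a * a * (b * sinv b)"
    by (rule comm[OF idR idL])
  have "is_inv (a*b) (sinv b * sinv a)" unfolding is_inv_def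
  proof
    have "a * b * (sinv b * sinv a) * (a * b) = a * (b * sinv b * (sinv a * a)) * b"
      by (simp add: mult.assoc)
    also have "\<dots> = a * b" unfolding c by (simp add: mult.assoc s1 s1')
    finally show "a * b * (sinv b * sinv a) * (a * b) = a * b" .
    have "sinv b * sinv a * (a * b) * (sinv b * sinv a) = sinv b * (sinv a * a * (b * sinv b)) * sinv a"
      by (simp add: mult.assoc)
    also have "\<dots> = sinv b * sinv a" unfolding c[symmetric] by (simp add: mult.assoc s2 s2')
    finally show "sinv b * sinv a * (a * b) * (sinv b * sinv a) = sinv b * sinv a" .
  qed
  thus ?thesis using inv_uniq by simp
qed

lemma rideal_sub: "rideal (a::'a) \<subseteq> rideal b \<longleftrightarrow> b * sinv b * a = a"
proof
  assume "rideal a \<subseteq> rideal b"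
  hence "a \<in> rideal b" unfolding rideal_def by auto
  then show "b * sinv b * a = a" unfolding rideal_def
    by (auto simp: mult.assoc s1 s1')
next
  assume h: "b * sinv b * a = a"
  show "rideal a \<subseteq> rideal b" unfolding rideal_def
  proof
    fix y assume "y \<in> insert a (range ((*) a))"
    then obtain z where "y = a \<or> y = a * z" by auto
    then show "y \<in> insert b (range ((*) b))"
      by (metis h mult.assoc rangeI insertI2)
  qed
qed

lemma greenR_iff: "greenR (u::'a) v \<longleftrightarrow> u * sinv u = v * sinv v"
proof
  assume "greenR u v"
  hence h1: "v * sinv v * u = u" and h2: "u * sinv u * v = v"
    unfolding greenR_def using rideal_sub by auto
  have a: "v * sinv v * (u * sinv u) = u * sinv u" using h1 by (metis mult.assoc)
  have b: "u * sinv u * (v * sinv v) = v * sinv v" using h2 by (metis mult.assoc)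
  show "u * sinv u = v * sinv v" using a b comm[OF idR idR, of u v] by simp
next
  assume h: "u * sinv u = v * sinv v"
  have "v * sinv v * u = u" by (metis h s1 mult.assoc)
  moreover have "u * sinv u * v = v" by (metis h s1 mult.assoc)
  ultimately show "greenR u v" unfolding greenR_def using rideal_sub by blast
qed

lemma lideal_sub: "lideal (a::'a) \<subseteq> lideal b \<longleftrightarrow> sinv a * a * (sinv b * b) = sinv a * a"
proof
  assume "lideal a \<subseteq> lideal b"
  hence "a \<in> lideal b" unfolding lideal_def by auto
  then have "a * (sinv b * b) = a" unfolding lideal_def
    by (auto simp: mult.assoc s1 s1')
  then show "sinv a * a * (sinv b * b) = sinv a * a" by (metis mult.assoc)
next
  assume h: "sinv a * a * (sinv b * b) = sinv a * a"
  have h': "a = a * sinv b * b" by (metis h s1 mult.assoc)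
  show "lideal a \<subseteq> lideal b" unfolding lideal_def
  proof
    fix y assume "y \<in> insert a (range (\<lambda>x. x * a))"
    then obtain z where "y = a \<or> y = z * a" by auto
    then show "y \<in> insert b (range (\<lambda>x. x * b))"
      by (metis h' mult.assoc rangeI insertI2)
  qed
qed

lemma Lclass_le_iff: "Lclass_le (Lclass (a::'a)) (Lclass b) \<longleftrightarrow> lideal a \<subseteq> lideal b"
proof
  assume "Lclass_le (Lclass a) (Lclass b)"
  then obtain a0 b0 where e1: "Lclass a = Lclass a0" and e2: "Lclass b = Lclass b0"
    and s: "lideal a0 \<subseteq> lideal b0" unfolding Lclass_le_def by blast
  have "a \<in> Lclass a0" using e1 unfolding Lclass_def greenL_def by auto
  moreover have "b \<in> Lclass b0" using e2 unfolding Lclass_def greenL_def by auto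
  ultimately show "lideal a \<subseteq> lideal b" using s unfolding Lclass_def greenL_def by auto
next
  assume "lideal a \<subseteq> lideal b" thus "Lclass_le (Lclass a) (Lclass b)"
    unfolding Lclass_le_def by blast
qed

lemma Lmeet_iff: "Lmeet_is (Lclass (b::'a)) (Lclass c) (Lclass w) \<longleftrightarrow>
   sinv w * w = sinv b * b * (sinv c * c)"
proof -
  have cbc: "sinv b * b * (sinv c * c) = sinv c * c * (sinv b * b)" by (rule comm[OF idL idL])
  define e where "e = sinv b * b * (sinv c * c)"
  have ee: "e * e = e" unfolding e_def by (metis cbc idL mult.assoc)
  have se: "sinv e * e = e" using idem_s[OF ee] ee by simp
  show ?thesis
  proof
    assume "Lmeet_is (Lclass b) (Lclass c) (Lclass w)"
    hence h1: "lideal w \<subseteq> lideal b" and h2: "lideal w \<subseteq> lideal c"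
      and h3: "\<And>a. lideal a \<subseteq> lideal b \<and> lideal a \<subseteq> lideal c \<longrightarrow> lideal a \<subseteq> lideal w"
      unfolding Lmeet_is_def Lclass_le_iff by auto
    have "e * (sinv b * b) = e" unfolding e_def by (metis cbc idL mult.assoc)
    hence "lideal e \<subseteq> lideal b" using se lideal_sub by simp
    moreover have "e * (sinv c * c) = e" unfolding e_def by (metis idL mult.assoc)
    hence "lideal e \<subseteq> lideal c" using se lideal_sub by simp
    ultimately have "lideal e \<subseteq> lideal w" using h3 by blast
    hence a: "e * (sinv w * w) = e" using se lideal_sub by simp
    have w1: "sinv w * w * (sinv b * b) = sinv w * w" using h1 lideal_sub by simp
    have w2: "sinv w * w * (sinv c * c) = sinv w * w" using h2 lideal_sub by simp
    have "sinv w * w * e = sinv w * w" unfolding e_def by (metis w1 w2 mult.assoc)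
    thus "sinv w * w = sinv b * b * (sinv c * c)" using a comm[OF ee idL, of w] e_def by simp
  next
    assume "sinv w * w = sinv b * b * (sinv c * c)"
    hence h: "sinv w * w = e" using e_def by simp
    have w1: "sinv w * w * (sinv b * b) = sinv w * w" unfolding h e_def by (metis cbc idL mult.assoc)
    have w2: "sinv w * w * (sinv c * c) = sinv w * w" unfolding h e_def by (metis idL mult.assoc)
    have "\<forall>a. lideal a \<subseteq> lideal b \<and> lideal a \<subseteq> lideal c \<longrightarrow> lideal a \<subseteq> lideal w"
    proof (intro allI impI)
      fix a assume "lideal a \<subseteq> lideal b \<and> lideal a \<subseteq> lideal c"
      hence a1: "sinv a * a * (sinv b * b) = sinv a * a" and a2: "sinv a * a * (sinv c * c) = sinv a * a"
        using lideal_sub by auto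
      have "sinv a * a * (sinv w * w) = sinv a * a" unfolding h e_def by (metis a1 a2 mult.assoc)
      thus "lideal a \<subseteq> lideal w" using lideal_sub by simp
    qed
    thus "Lmeet_is (Lclass b) (Lclass c) (Lclass w)"
      unfolding Lmeet_is_def Lclass_le_iff using w1 w2 lideal_sub by auto
  qed
qed

end

theorem lemma3p6:
  fixes b c u v :: "'a::semigroup_mult"
  assumes "inverse_semigroup TYPE('a)"
    and "greenR u v"
  shows "b * sinv c = sinv u * v \<longleftrightarrow>
           (u * b = v * c \<and> greenR v (v * c) \<and> Lmeet_is (Lclass b) (Lclass c) (Lclass (u * b)))"
proof -
  note IS = assms(1)
  have hR: "u * sinv u = v * sinv v" using greenR_iff[OF IS] assms(2) by simp
  have cbc: "b * sinv b * (sinv u * u) = sinv u * u * (b * sinv b)" by (rule comm[OF IS idR[OF IS] idL[OF IS]])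
  have cc1: "sinv c * c * (sinv b * b) = sinv b * b * (sinv c * c)" by (rule comm[OF IS idL[OF IS] idL[OF IS]])
  have cc2: "c * sinv c * (sinv v * v) = sinv v * v * (c * sinv c)" by (rule comm[OF IS idR[OF IS] idL[OF IS]])
  have sb: "b * (sinv b * b) = b" "sinv b * (b * sinv b) = sinv b" "v * (sinv v * v) = v"
     "c * (sinv c * c) = c" "sinv c * (c * sinv c) = sinv c" "u * (sinv u * u) = u"
    using s1[OF IS] s2[OF IS] by auto
  show ?thesis
  proof
    assume H: "b * sinv c = sinv u * v"
    have f1: "u * b * sinv c = v"
    proof -
      have "u * b * sinv c = u * sinv u * v" using H by (simp add: mult.assoc)
      also have "\<dots> = v" using hR sb by (simp add: mult.assoc)
      finally show ?thesis .
    qed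
    have f2: "sinv u * u = b * sinv c * c * sinv b"
    proof -
      have "sinv (sinv u * v) = sinv v * u" using s_mult[OF IS] ss[OF IS] by simp
      moreover have "sinv (b * sinv c) = c * sinv b" using s_mult[OF IS] ss[OF IS] by simp
      ultimately have e: "sinv v * u = c * sinv b" using H by simp
      have "sinv u * u = sinv u * (u * sinv u) * u" using sb by (simp add: mult.assoc)
      also have "\<dots> = sinv u * v * (sinv v * u)" using hR by (simp add: mult.assoc)
      also have "\<dots> = b * sinv c * c * sinv b" using H e by (simp add: mult.assoc)
      finally show ?thesis .
    qed
    have f3: "b * sinv c * c * sinv b * b = b * sinv c * c"
    proof -
      have "b * sinv c * c * sinv b * b = b * (sinv c * c * (sinv b * b))" by (simp add: mult.assoc)
      also have "\<dots> = b * (sinv b * b) * (sinv c * c)" unfolding cc1 by (simp add: mult.assoc)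
      also have "\<dots> = b * sinv c * c" using sb by (simp add: mult.assoc)
      finally show ?thesis .
    qed
    have ub: "u * b = v * c"
    proof -
      have "u * b = u * (sinv u * u) * b" using sb by simp
      also have "\<dots> = u * (b * sinv c * c * sinv b * b)" using f2 by (simp add: mult.assoc)
      also have "\<dots> = u * b * sinv c * c" using f3 by (simp add: mult.assoc)
      also have "\<dots> = v * c" using f1 by simp
      finally show ?thesis .
    qed
    have vcc: "v * c * sinv c = v"
    proof -
      have "v * c * sinv c = u * b * sinv c * (c * sinv c)" using ub by (simp add: mult.assoc sb)
      also have "\<dots> = u * b * sinv c" using sb by (simp add: mult.assoc)
      finally show ?thesis using f1 by simp
    qed
    have gR: "greenR v (v * c)"
    proof -
      have "v * c * sinv (v * c) = v * c * sinv c * sinv v" using s_mult[OF IS] by (simp add: mult.assoc)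
      also have "\<dots> = v * sinv v" using vcc by simp
      finally show ?thesis using greenR_iff[OF IS] by simp
    qed
    have "sinv (u * b) * (u * b) = sinv b * b * (sinv c * c)"
    proof -
      have "sinv (u * b) * (u * b) = sinv b * (sinv u * u) * b" using s_mult[OF IS] by (simp add: mult.assoc)
      also have "\<dots> = sinv b * (b * sinv c * c)" using f2 f3 by (simp add: mult.assoc)
      also have "\<dots> = sinv b * b * (sinv c * c)" by (simp add: mult.assoc)
      finally show ?thesis .
    qed
    thus "u * b = v * c \<and> greenR v (v * c) \<and> Lmeet_is (Lclass b) (Lclass c) (Lclass (u * b))"
      using ub gR Lmeet_iff[OF IS] by simp
  next
    assume "u * b = v * c \<and> greenR v (v * c) \<and> Lmeet_is (Lclass b) (Lclass c) (Lclass (u * b))"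
    hence ub: "u * b = v * c" and gR: "greenR v (v * c)"
      and M: "sinv (u * b) * (u * b) = sinv b * b * (sinv c * c)"
      using Lmeet_iff[OF IS] by auto
    have M': "sinv b * (sinv u * u) * b = sinv b * b * (sinv c * c)"
      using M s_mult[OF IS] by (simp add: mult.assoc)
    have g0: "v * c * sinv c * sinv v = v * sinv v"
      using gR greenR_iff[OF IS] s_mult[OF IS] by (simp add: mult.assoc)
    have g1: "v = v * c * sinv c"
    proof -
      have "v = v * sinv v * v" using sb by (simp add: mult.assoc)
      also have "\<dots> = v * (c * sinv c * (sinv v * v))" using g0 by (metis mult.assoc)
      also have "\<dots> = v * (sinv v * v) * (c * sinv c)" unfolding cc2 by (simp add: mult.assoc)
      also have "\<dots> = v * c * sinv c" using sb by (simp add: mult.assoc)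
      finally show ?thesis .
    qed
    have g2: "b * sinv c = sinv u * u * b * sinv c"
    proof -
      have "b * sinv c = b * (sinv c * c) * sinv c" using sb by (simp add: mult.assoc)
      also have "\<dots> = b * (sinv b * b * (sinv c * c)) * sinv c" using sb by (metis mult.assoc)
      also have "\<dots> = b * (sinv b * (sinv u * u) * b) * sinv c" using M' by simp
      also have "\<dots> = (b * sinv b * (sinv u * u)) * b * sinv c" by (simp add: mult.assoc)
      also have "\<dots> = sinv u * u * (b * sinv b) * b * sinv c" unfolding cbc by simp
      also have "\<dots> = sinv u * u * b * sinv c" using sb by (simp add: mult.assoc)
      finally show ?thesis .
    qed
    have "sinv u * v = sinv u * (v * c) * sinv c" using g1 by (metis mult.assoc)
    also have "\<dots> = b * sinv c" using ub g2 by (simp add: mult.assoc)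
    finally show "b * sinv c = sinv u * v" by simp
  qed
qed

end
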